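(* Let $(A_i,\omega_i)$, $i=1,2$, be commutative unital baric algebras over $K$. Then the map $(I,J)\mapsto I\bowtie J=\{(a,b)\in A_1\bowtie A_2: a\in I,\ b\in J\}$ is a bijection from $\mathcal{I}(A_1,\omega_1)\times\mathcal{I}(A_2,\omega_2)$ onto $\mathcal{I}(A_1\bowtie A_2,\omega_1\bowtie\omega_2)\setminus\{\operatorname{Ker}(\omega_1\bowtie\omega_2)\}$, with inverse $I\mapsto(I_1,I_2)$.
   Context: A baric algebra over a field $K$ is a pair $(A,\omega)$ where $A$ is a (not necessarily associative) $K$-algebra and $\omega:A\to K$ is a nonzero $K$-algebra homomorphism. For baric algebras $(A_1,\omega_1),(A_2,\omega_2)$, $A_1\bowtie A_2$ denotes the vector space $A_1\oplus A_2$ with product $(a_1,a_2)(b_1,b_2)=(a_1b_1+\omega_2(b_2)a_1,\ a_2b_2+\omega_1(b_1)a_2)$, and $\omega_1\bowtie\omega_2(a_1,a_2)=\omega_1(a_1)+\omega_2(a_2)$. For a baric algebra $(A,\omega)$, $\mathcal{I}(A,\omega)$ is the set of two-sided ideals $I$ of $A$ with $I\subseteq\operatorname{Ker}\omega$. For $I\subseteq A_1\bowtie A_2$, $I_1=\{a_1:\exists a_2,\ (a_1,a_2)\in I\}$ and $I_2=\{a_2:\exists a_1,\ (a_1,a_2)\in I\}$. *)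

theory Defs
  imports Main "HOL.Vector_Spaces" "HOL-Library.Product_Plus"
begin

definition is_algebra :: "('k::field \<Rightarrow> 'a::ab_group_add \<Rightarrow> 'a) \<Rightarrow> ('a \<Rightarrow> 'a \<Rightarrow> 'a) \<Rightarrow> bool" where
  "is_algebra s m \<longleftrightarrow> Vector_Spaces.vector_space s \<and>
     (\<forall>x y z. m (x + y) z = m x z + m y z) \<and>
     (\<forall>x y z. m x (y + z) = m x y + m x z) \<and>
     (\<forall>c x y. m (s c x) y = s c (m x y)) \<and>
     (\<forall>c x y. m x (s c y) = s c (m x y))"

definition alg_hom_to_field :: "('k::field \<Rightarrow> 'a::ab_group_add \<Rightarrow> 'a) \<Rightarrow> ('a \<Rightarrow> 'a \<Rightarrow> 'a) \<Rightarrow> ('a \<Rightarrow> 'k) \<Rightarrow> bool" where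
  "alg_hom_to_field s m \<omega> \<longleftrightarrow>
     (\<forall>x y. \<omega> (x + y) = \<omega> x + \<omega> y) \<and>
     (\<forall>c x. \<omega> (s c x) = c * \<omega> x) \<and>
     (\<forall>x y. \<omega> (m x y) = \<omega> x * \<omega> y)"

definition baric_algebra :: "('k::field \<Rightarrow> 'a::ab_group_add \<Rightarrow> 'a) \<Rightarrow> ('a \<Rightarrow> 'a \<Rightarrow> 'a) \<Rightarrow> ('a \<Rightarrow> 'k) \<Rightarrow> bool" where
  "baric_algebra s m \<omega> \<longleftrightarrow> is_algebra s m \<and> alg_hom_to_field s m \<omega> \<and> (\<exists>x. \<omega> x \<noteq> 0)"

definition alg_commutative :: "('a \<Rightarrow> 'a \<Rightarrow> 'a) \<Rightarrow> bool" where
  "alg_commutative m \<longleftrightarrow> (\<forall>x y. m x y = m y x)"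

definition alg_unital :: "('a \<Rightarrow> 'a \<Rightarrow> 'a) \<Rightarrow> bool" where
  "alg_unital m \<longleftrightarrow> (\<exists>e. \<forall>x. m e x = x \<and> m x e = x)"

definition alg_ideal :: "('k::field \<Rightarrow> 'a::ab_group_add \<Rightarrow> 'a) \<Rightarrow> ('a \<Rightarrow> 'a \<Rightarrow> 'a) \<Rightarrow> 'a set \<Rightarrow> bool" where
  "alg_ideal s m I \<longleftrightarrow> 0 \<in> I \<and>
     (\<forall>x\<in>I. \<forall>y\<in>I. x + y \<in> I) \<and>
     (\<forall>c. \<forall>x\<in>I. s c x \<in> I) \<and>
     (\<forall>x\<in>I. \<forall>y. m x y \<in> I \<and> m y x \<in> I)"

definition baric_ideals :: "('k::field \<Rightarrow> 'a::ab_group_add \<Rightarrow> 'a) \<Rightarrow> ('a \<Rightarrow> 'a \<Rightarrow> 'a) \<Rightarrow> ('a \<Rightarrow> 'k) \<Rightarrow> 'a set set" where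
  "baric_ideals s m \<omega> = {I. alg_ideal s m I \<and> I \<subseteq> {x. \<omega> x = 0}}"

definition join_scale :: "('k \<Rightarrow> 'a \<Rightarrow> 'a) \<Rightarrow> ('k \<Rightarrow> 'b \<Rightarrow> 'b) \<Rightarrow> 'k \<Rightarrow> 'a \<times> 'b \<Rightarrow> 'a \<times> 'b" where
  "join_scale s1 s2 c p = (s1 c (fst p), s2 c (snd p))"

definition join_mult :: "('k \<Rightarrow> 'a \<Rightarrow> 'a) \<Rightarrow> ('a \<Rightarrow> 'a \<Rightarrow> 'a) \<Rightarrow> ('a \<Rightarrow> 'k)
    \<Rightarrow> ('k \<Rightarrow> 'b \<Rightarrow> 'b) \<Rightarrow> ('b \<Rightarrow> 'b \<Rightarrow> 'b) \<Rightarrow> ('b \<Rightarrow> 'k)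
    \<Rightarrow> 'a \<times> 'b \<Rightarrow> 'a \<times> 'b \<Rightarrow> ('a::plus) \<times> ('b::plus)" where
  "join_mult s1 m1 \<omega>1 s2 m2 \<omega>2 p q =
     (m1 (fst p) (fst q) + s1 (\<omega>2 (snd q)) (fst p),
      m2 (snd p) (snd q) + s2 (\<omega>1 (fst q)) (snd p))"

definition join_omega :: "('a \<Rightarrow> 'k::plus) \<Rightarrow> ('b \<Rightarrow> 'k) \<Rightarrow> 'a \<times> 'b \<Rightarrow> 'k" where
  "join_omega \<omega>1 \<omega>2 p = \<omega>1 (fst p) + \<omega>2 (snd p)"

definition ideal_join :: "'a set \<Rightarrow> 'b set \<Rightarrow> ('a \<times> 'b) set" where
  "ideal_join I J = {(a, b). a \<in> I \<and> b \<in> J}"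

definition proj1 :: "('a \<times> 'b) set \<Rightarrow> 'a set" where
  "proj1 I = {a1. \<exists>a2. (a1, a2) \<in> I}"

definition proj2 :: "('a \<times> 'b) set \<Rightarrow> 'b set" where
  "proj2 I = {a2. \<exists>a1. (a1, a2) \<in> I}"

end

theory Submission
  imports Defs
begin

lemma baric_basics:
  assumes b: "baric_algebra s m \<omega>"
  shows "\<omega> 0 = 0" "\<And>x. \<omega> (-x) = - \<omega> x" "\<And>x. m 0 x = 0" "\<And>x. m x 0 = 0"
    "\<And>x y. m (-x) y = - m x y" "\<And>x y. m x (-y) = - m x y"
    "\<And>x. s 0 x = 0" "\<And>x. s 1 x = x" "\<And>c. s c 0 = 0" "\<And>c x. s c (-x) = - s c x"
    "\<And>a b x. s a (s b x) = s (a*b) x" "\<And>a x y. s a (x+y) = s a x + s a y"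
    "\<And>a b x. s (a+b) x = s a x + s b x" "\<And>a x. s (-a) x = - s a x"
    "\<And>x y. \<omega> (x + y) = \<omega> x + \<omega> y" "\<And>c x. \<omega> (s c x) = c * \<omega> x"
    "\<And>x y. \<omega> (m x y) = \<omega> x * \<omega> y"
    "\<And>x y z. m (x + y) z = m x z + m y z" "\<And>x y z. m x (y + z) = m x y + m x z"
proof -
  have vs: "Vector_Spaces.vector_space s" and al: "is_algebra s m" and h: "alg_hom_to_field s m \<omega>"
    using b unfolding baric_algebra_def is_algebra_def by auto
  interpret v: vector_space s by (rule vs)
  have ad: "\<And>x y. \<omega> (x + y) = \<omega> x + \<omega> y" using h unfolding alg_hom_to_field_def by auto
  show "\<And>x y. \<omega> (x + y) = \<omega> x + \<omega> y" by (rule ad)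
  show "\<And>c x. \<omega> (s c x) = c * \<omega> x" "\<And>x y. \<omega> (m x y) = \<omega> x * \<omega> y"
    using h unfolding alg_hom_to_field_def by auto
  have ml: "\<And>x y z. m (x + y) z = m x z + m y z" and mr: "\<And>x y z. m x (y + z) = m x y + m x z"
    using al unfolding is_algebra_def by auto
  show "\<And>x y z. m (x + y) z = m x z + m y z" "\<And>x y z. m x (y + z) = m x y + m x z" by (fact ml mr)+
  show o0: "\<omega> 0 = 0" using ad[of 0 0] by (metis add.right_neutral add_left_cancel)
  show "\<And>x. \<omega> (-x) = - \<omega> x" using ad o0 by (metis add.right_inverse add_eq_0_iff)
  show m0: "\<And>x. m 0 x = 0" using ml by (metis add.right_neutral add_left_cancel)
  show m0': "\<And>x. m x 0 = 0" using mr by (metis add.right_neutral add_left_cancel)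
  show "\<And>x y. m (-x) y = - m x y" using ml m0 by (metis add.right_inverse add_eq_0_iff)
  show "\<And>x y. m x (-y) = - m x y" using mr m0' by (metis add.right_inverse add_eq_0_iff)
  show "\<And>x. s 0 x = 0" "\<And>x. s 1 x = x" "\<And>c. s c 0 = 0" "\<And>c x. s c (-x) = - s c x"
    "\<And>a b x. s a (s b x) = s (a*b) x" "\<And>a x y. s a (x+y) = s a x + s a y"
    "\<And>a b x. s (a+b) x = s a x + s b x" "\<And>a x. s (-a) x = - s a x"
    using v.scale_zero_left v.scale_one v.scale_zero_right
      v.scale_minus_right v.scale_scale v.scale_right_distrib
      v.scale_left_distrib v.scale_minus_left by metis+
qed

lemma baric_unit:
  assumes b: "baric_algebra s m \<omega>" and u: "alg_unital m"
  obtains e where "\<And>x. m e x = x" "\<And>x. m x e = x" "\<omega> e = 1"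
proof -
  obtain e where e: "\<And>x. m e x = x \<and> m x e = x" using u unfolding alg_unital_def by auto
  obtain x where x: "\<omega> x \<noteq> 0" using b unfolding baric_algebra_def by auto
  have "\<omega> x = \<omega> x * \<omega> e" using baric_basics(17)[OF b, of x e] e by simp
  hence "\<omega> e = 1" using x by simp
  thus ?thesis using that e by auto
qed


theorem proposition5p4:
  fixes s1 :: "'k::field \<Rightarrow> 'a::ab_group_add \<Rightarrow> 'a" and m1 :: "'a \<Rightarrow> 'a \<Rightarrow> 'a" and \<omega>1 :: "'a \<Rightarrow> 'k"
    and s2 :: "'k \<Rightarrow> 'b::ab_group_add \<Rightarrow> 'b" and m2 :: "'b \<Rightarrow> 'b \<Rightarrow> 'b" and \<omega>2 :: "'b \<Rightarrow> 'k"
  assumes "baric_algebra s1 m1 \<omega>1" and "alg_commutative m1" and "alg_unital m1"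
    and "baric_algebra s2 m2 \<omega>2" and "alg_commutative m2" and "alg_unital m2"
  defines "S \<equiv> join_scale s1 s2" and "M \<equiv> join_mult s1 m1 \<omega>1 s2 m2 \<omega>2"
    and "W \<equiv> join_omega \<omega>1 \<omega>2"
  shows "bij_betw (\<lambda>(I, J). ideal_join I J)
           (baric_ideals s1 m1 \<omega>1 \<times> baric_ideals s2 m2 \<omega>2)
           (baric_ideals S M W - {{x. W x = 0}})
       \<and> (\<forall>P \<in> baric_ideals s1 m1 \<omega>1 \<times> baric_ideals s2 m2 \<omega>2.
             (proj1 (ideal_join (fst P) (snd P)), proj2 (ideal_join (fst P) (snd P))) = P)
       \<and> (\<forall>I \<in> baric_ideals S M W - {{x. W x = 0}}. ideal_join (proj1 I) (proj2 I) = I)"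
proof -
  obtain e1 where e1: "\<And>x. m1 e1 x = x" "\<And>x. m1 x e1 = x" "\<omega>1 e1 = 1"
    using baric_unit[OF assms(1,3)] by blast
  obtain e2 where e2: "\<And>x. m2 e2 x = x" "\<And>x. m2 x e2 = x" "\<omega>2 e2 = 1"
    using baric_unit[OF assms(4,6)] by blast
  note B1 = baric_basics[OF assms(1)] and B2 = baric_basics[OF assms(4)]
  have Sp: "\<And>c x y. S c (x, y) = (s1 c x, s2 c y)" unfolding S_def join_scale_def by simp
  have Mp: "\<And>a1 a2 b1 b2. M (a1, a2) (b1, b2) =
      (m1 a1 b1 + s1 (\<omega>2 b2) a1, m2 a2 b2 + s2 (\<omega>1 b1) a2)" unfolding M_def join_mult_def by simp
  have Wp: "\<And>x y. W (x, y) = \<omega>1 x + \<omega>2 y" unfolding W_def join_omega_def by simp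
  have L1: "ideal_join I J \<in> baric_ideals S M W - {{x. W x = 0}}"
    if I: "I \<in> baric_ideals s1 m1 \<omega>1" and J: "J \<in> baric_ideals s2 m2 \<omega>2" for I J
  proof -
    have Ii: "0 \<in> I" "\<And>x y. x \<in> I \<Longrightarrow> y \<in> I \<Longrightarrow> x + y \<in> I" "\<And>c x. x \<in> I \<Longrightarrow> s1 c x \<in> I"
      "\<And>x y. x \<in> I \<Longrightarrow> m1 x y \<in> I" "\<And>x y. x \<in> I \<Longrightarrow> m1 y x \<in> I" "\<And>x. x \<in> I \<Longrightarrow> \<omega>1 x = 0"
      using I unfolding baric_ideals_def alg_ideal_def by auto
    have Ji: "0 \<in> J" "\<And>x y. x \<in> J \<Longrightarrow> y \<in> J \<Longrightarrow> x + y \<in> J" "\<And>c x. x \<in> J \<Longrightarrow> s2 c x \<in> J"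
      "\<And>x y. x \<in> J \<Longrightarrow> m2 x y \<in> J" "\<And>x y. x \<in> J \<Longrightarrow> m2 y x \<in> J" "\<And>x. x \<in> J \<Longrightarrow> \<omega>2 x = 0"
      using J unfolding baric_ideals_def alg_ideal_def by auto
    have "alg_ideal S M (ideal_join I J)"
      unfolding alg_ideal_def ideal_join_def
    proof (intro conjI ballI allI)
      show "0 \<in> {(a, b). a \<in> I \<and> b \<in> J}" using Ii(1) Ji(1) by (simp add: zero_prod_def)
    next
      fix x y assume "x \<in> {(a, b). a \<in> I \<and> b \<in> J}" "y \<in> {(a, b). a \<in> I \<and> b \<in> J}"
      thus "x + y \<in> {(a, b). a \<in> I \<and> b \<in> J}" using Ii(2) Ji(2) by (auto simp: plus_prod_def)
    next
      fix c x assume "x \<in> {(a, b). a \<in> I \<and> b \<in> J}"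
      thus "S c x \<in> {(a, b). a \<in> I \<and> b \<in> J}" using Ii(3) Ji(3) by (auto simp: Sp)
    next
      fix x y assume "x \<in> {(a, b). a \<in> I \<and> b \<in> J}"
      thus "M x y \<in> {(a, b). a \<in> I \<and> b \<in> J}"
        using Ii Ji by (cases y) (auto simp: Mp B1 B2)
    next
      fix x y assume "x \<in> {(a, b). a \<in> I \<and> b \<in> J}"
      thus "M y x \<in> {(a, b). a \<in> I \<and> b \<in> J}"
        using Ii Ji by (cases y) (auto simp: Mp B1 B2)
    qed
    moreover have "ideal_join I J \<subseteq> {x. W x = 0}"
      using Ii(6) Ji(6) by (auto simp: ideal_join_def Wp)
    moreover have "(e1, - e2) \<in> {x. W x = 0}" by (simp add: Wp B2 e1 e2)
    moreover have "(e1, - e2) \<notin> ideal_join I J" using Ii(6) e1(3) by (auto simp: ideal_join_def)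
    ultimately show ?thesis unfolding baric_ideals_def by blast
  qed
  have L2: "(proj1 (ideal_join I J), proj2 (ideal_join I J)) = (I, J)"
    if I: "I \<in> baric_ideals s1 m1 \<omega>1" and J: "J \<in> baric_ideals s2 m2 \<omega>2" for I J
  proof -
    have "0 \<in> I" "0 \<in> J" using I J unfolding baric_ideals_def alg_ideal_def by auto
    thus ?thesis unfolding proj1_def proj2_def ideal_join_def by auto
  qed
  have L3: "proj1 K \<in> baric_ideals s1 m1 \<omega>1 \<and> proj2 K \<in> baric_ideals s2 m2 \<omega>2
      \<and> ideal_join (proj1 K) (proj2 K) = K"
    if K: "K \<in> baric_ideals S M W - {{x. W x = 0}}" for K
  proof -
    have K0: "(0, 0) \<in> K" using K unfolding baric_ideals_def alg_ideal_def by (auto simp: zero_prod_def)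
    have Kg1: "\<forall>x\<in>K. \<forall>y\<in>K. x + y \<in> K" and Kg2: "\<forall>c. \<forall>x\<in>K. S c x \<in> K"
      using K unfolding baric_ideals_def alg_ideal_def by blast+
    have Kadd: "\<And>a b c d. (a, b) \<in> K \<Longrightarrow> (c, d) \<in> K \<Longrightarrow> (a + c, b + d) \<in> K"
      using Kg1 by (metis add_Pair)
    have Ksc: "\<And>c a b. (a, b) \<in> K \<Longrightarrow> (s1 c a, s2 c b) \<in> K"
      using Kg2 by (metis Sp)
    have Kneg: "\<And>a b. (a, b) \<in> K \<Longrightarrow> (- a, - b) \<in> K"
      using Ksc[of _ _ "-1"] by (simp add: B1(14) B2(14) B1(8) B2(8))
    have KM: "\<And>p q. p \<in> K \<Longrightarrow> M p q \<in> K \<and> M q p \<in> K"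
      using K unfolding baric_ideals_def alg_ideal_def by blast
    have KW: "\<And>a b. (a, b) \<in> K \<Longrightarrow> \<omega>1 a + \<omega>2 b = 0"
      using K unfolding baric_ideals_def by (auto simp: Wp)
    have KnW: "K \<noteq> {x. W x = 0}" using K by blast
    have zero2: "\<omega>2 a2 = 0" if a: "(a1, a2) \<in> K" for a1 a2
    proof (rule ccontr)
      assume t: "\<omega>2 a2 \<noteq> 0"
      define t where "t = \<omega>2 a2"
      have w1: "\<omega>1 a1 = - t" using KW[OF a] unfolding t_def by (simp add: eq_neg_iff_add_eq_0)
      have "M (e1, 0) (a1, a2) \<in> K" using KM[OF a] by blast
      hence p1: "(a1 + s1 t e1, 0) \<in> K" by (simp add: Mp e1 B2 t_def)
      have "M (0, e2) (a1, a2) \<in> K" using KM[OF a] by blast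
      hence p2: "(0, a2 + s2 (- t) e2) \<in> K" by (simp add: Mp e2 B1 w1)
      have "(a1 + s1 t e1 + 0 + - a1, 0 + (a2 + s2 (- t) e2) + - a2) \<in> K"
        by (rule Kadd[OF Kadd[OF p1 p2] Kneg[OF a]])
      hence "(s1 t e1, s2 (- t) e2) \<in> K" by (simp add: algebra_simps)
      hence "(s1 (1/t) (s1 t e1), s2 (1/t) (s2 (- t) e2)) \<in> K" by (rule Ksc)
      hence u: "(e1, - e2) \<in> K" using t unfolding t_def[symmetric] by (simp add: B1 B2)
      have "{x. W x = 0} \<subseteq> K"
      proof
        fix p assume "p \<in> {x. W x = 0}"
        then obtain x y where p: "p = (x, y)" and w: "\<omega>1 x + \<omega>2 y = 0" by (cases p) (auto simp: Wp)
        define c where "c = \<omega>1 x"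
        have wy: "\<omega>2 y = - c" using w unfolding c_def by (simp add: eq_neg_iff_add_eq_0 add.commute)
        have "M (e1, - e2) (x, 0) \<in> K" using KM[OF u] by blast
        hence q1: "(x, - s2 c e2) \<in> K" by (simp add: Mp e1 B1 B2 c_def)
        have "M (e1, - e2) (0, y) \<in> K" using KM[OF u] by blast
        hence q2: "(- s1 c e1, - y) \<in> K" by (simp add: Mp e1 e2 B1 B2 wy)
        have "(x + - (- s1 c e1) + - (s1 c e1), - s2 c e2 + - (- y) + - (s2 c (- e2))) \<in> K"
          by (rule Kadd[OF Kadd[OF q1 Kneg[OF q2]] Kneg[OF Ksc[OF u]]])
        thus "p \<in> K" by (simp add: p B2)
      qed
      moreover have "K \<subseteq> {x. W x = 0}" using K unfolding baric_ideals_def by blast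
      ultimately show False using KnW by blast
    qed
    have zero1: "\<omega>1 a1 = 0" if a: "(a1, a2) \<in> K" for a1 a2
      using KW[OF a] zero2[OF a] by simp
    have c1: "(a1, 0) \<in> K" if a: "(a1, a2) \<in> K" for a1 a2
    proof -
      have "M (e1, 0) (a1, a2) \<in> K" using KM[OF a] by blast
      thus ?thesis by (simp add: Mp e1 B1 B2 zero2[OF a])
    qed
    have c2: "(0, a2) \<in> K" if a: "(a1, a2) \<in> K" for a1 a2
    proof -
      have "M (0, e2) (a1, a2) \<in> K" using KM[OF a] by blast
      thus ?thesis by (simp add: Mp e2 B1 B2 zero1[OF a])
    qed
    have P1: "proj1 K = {a. (a, 0) \<in> K}" unfolding proj1_def using c1 by blast
    have P2: "proj2 K = {a. (0, a) \<in> K}" unfolding proj2_def using c2 by blast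
    have m1a: "(m1 x y, 0) \<in> K" "(m1 y x, 0) \<in> K" if "(x, 0) \<in> K" for x y
    proof -
      have "M (x, 0) (y, 0) \<in> K" "M (y, 0) (x, 0) \<in> K" using KM that by auto
      thus "(m1 x y, 0) \<in> K" "(m1 y x, 0) \<in> K" by (simp_all add: Mp B1 B2)
    qed
    have m2a: "(0, m2 x y) \<in> K" "(0, m2 y x) \<in> K" if "(0, x) \<in> K" for x y
    proof -
      have "M (0, x) (0, y) \<in> K" "M (0, y) (0, x) \<in> K" using KM that by auto
      thus "(0, m2 x y) \<in> K" "(0, m2 y x) \<in> K" by (simp_all add: Mp B1 B2)
    qed
    have s1a: "(s1 c x, 0) \<in> K" if "(x, 0) \<in> K" for c x using Ksc[OF that, of c] by (simp add: B2)
    have s2a: "(0, s2 c x) \<in> K" if "(0, x) \<in> K" for c x using Ksc[OF that, of c] by (simp add: B1)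
    have a1a: "(x + y, 0) \<in> K" if "(x, 0) \<in> K" "(y, 0) \<in> K" for x y using Kadd[OF that] by simp
    have a2a: "(0, x + y) \<in> K" if "(0, x) \<in> K" "(0, y) \<in> K" for x y using Kadd[OF that] by simp
    have "proj1 K \<in> baric_ideals s1 m1 \<omega>1"
      unfolding baric_ideals_def alg_ideal_def P1 using K0 m1a s1a a1a zero1 by auto
    moreover have "proj2 K \<in> baric_ideals s2 m2 \<omega>2"
      unfolding baric_ideals_def alg_ideal_def P2 using K0 m2a s2a a2a zero2 by auto
    moreover have "ideal_join (proj1 K) (proj2 K) = K"
    proof
      show "ideal_join (proj1 K) (proj2 K) \<subseteq> K"
        unfolding ideal_join_def P1 P2 using Kadd by fastforce
      show "K \<subseteq> ideal_join (proj1 K) (proj2 K)"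
        unfolding ideal_join_def proj1_def proj2_def by auto
    qed
    ultimately show ?thesis by blast
  qed
  have bij: "bij_betw (\<lambda>(I, J). ideal_join I J)
           (baric_ideals s1 m1 \<omega>1 \<times> baric_ideals s2 m2 \<omega>2)
           (baric_ideals S M W - {{x. W x = 0}})"
  proof (rule bij_betw_byWitness[where f'="\<lambda>K. (proj1 K, proj2 K)"])
    show "\<forall>a\<in>baric_ideals s1 m1 \<omega>1 \<times> baric_ideals s2 m2 \<omega>2.
        (\<lambda>K. (proj1 K, proj2 K)) ((\<lambda>(I, J). ideal_join I J) a) = a"
      using L2 by auto
    show "\<forall>a'\<in>baric_ideals S M W - {{x. W x = 0}}.
        (\<lambda>(I, J). ideal_join I J) ((\<lambda>K. (proj1 K, proj2 K)) a') = a'"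
      using L3 by auto
    show "(\<lambda>(I, J). ideal_join I J) ` (baric_ideals s1 m1 \<omega>1 \<times> baric_ideals s2 m2 \<omega>2)
        \<subseteq> baric_ideals S M W - {{x. W x = 0}}"
      using L1 by auto
    show "(\<lambda>K. (proj1 K, proj2 K)) ` (baric_ideals S M W - {{x. W x = 0}})
        \<subseteq> baric_ideals s1 m1 \<omega>1 \<times> baric_ideals s2 m2 \<omega>2"
      using L3 by auto
  qed
  show ?thesis using bij L2 L3 by auto
qed

end
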